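(* Let $R$ be a noetherian integral domain, $n\ge1$, $R[n]=R[t]/(t^n)$, and $M$ an $R[n]$-module of finite type. Let $M^\vee=\mathrm{Hom}_{R[n]}(M,R[n])$ and let $t_M:M\to M^{\vee\vee}$ be the canonical morphism, $t_M(m)(\phi)=\phi(m)$. Then $\mathrm{coker}(t_M)$ is a torsion module.
   Context: An element $u=\sum_{i=0}^{n-1}u_it^i\in R[n]$ ($u_i\in R$) is a non-zero-divisor iff $u_0\ne0$; let $S_n$ be the set of non-zero-divisors. For an $R[n]$-module $N$, the torsion submodule $T(N)$ is the set of $m\in N$ such that $\alpha m=0$ for some $\alpha\in S_n$; $N$ is a torsion module if $N=T(N)$. *)

theory Defs
  imports "HOL-Algebra.Module" "HOL-Computational_Algebra.Polynomial"
begin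

definition is_ideal :: "'a::comm_ring_1 set \<Rightarrow> bool" where
  "is_ideal I \<longleftrightarrow> 0 \<in> I \<and> (\<forall>x\<in>I. \<forall>y\<in>I. x + y \<in> I) \<and> (\<forall>r. \<forall>x\<in>I. r * x \<in> I)"

definition noetherian_type :: "'a::comm_ring_1 itself \<Rightarrow> bool" where
  "noetherian_type _ \<longleftrightarrow> (\<forall>I::'a set. is_ideal I \<longrightarrow>
      (\<exists>A. finite A \<and> A \<subseteq> I \<and> I = {\<Sum>a\<in>A. r a * a | r. True}))"

text \<open>Truncation modulo t^n, and the ring R[n] = R[t]/(t^n), elements represented
  by polynomials of degree < n.\<close>
definition trunc_poly :: "nat \<Rightarrow> 'a::comm_ring_1 poly \<Rightarrow> 'a poly" where
  "trunc_poly n p = (\<Sum>i<n. monom (coeff p i) i)"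

definition Rn :: "nat \<Rightarrow> 'a::comm_ring_1 poly ring" where
  "Rn n = \<lparr> carrier = {p. degree p < n}, monoid.mult = (\<lambda>p q. trunc_poly n (p * q)),
            one = 1, zero = 0, add = (+) \<rparr>"

definition nzd :: "nat \<Rightarrow> 'a::comm_ring_1 poly set" where
  "nzd n = {u \<in> carrier (Rn n). \<forall>v\<in>carrier (Rn n). u \<otimes>\<^bsub>Rn n\<^esub> v = \<zero>\<^bsub>Rn n\<^esub> \<longrightarrow> v = \<zero>\<^bsub>Rn n\<^esub>}"

definition fin_gen_module :: "('a, 'b) ring_scheme \<Rightarrow> ('a, 'm) module \<Rightarrow> bool" where
  "fin_gen_module R M \<longleftrightarrow> (\<exists>A. finite A \<and> A \<subseteq> carrier M \<and>
     (\<forall>x\<in>carrier M. \<exists>c\<in>A \<rightarrow> carrier R. x = finsum M (\<lambda>a. c a \<odot>\<^bsub>M\<^esub> a) A))"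

definition lin_to_ring :: "('a, 'b) ring_scheme \<Rightarrow> 'd set \<Rightarrow> ('d \<Rightarrow> 'd \<Rightarrow> 'd)
     \<Rightarrow> ('a \<Rightarrow> 'd \<Rightarrow> 'd) \<Rightarrow> ('d \<Rightarrow> 'a) \<Rightarrow> bool" where
  "lin_to_ring R D addD smulD f \<longleftrightarrow> f \<in> D \<rightarrow> carrier R \<and>
     (\<forall>x\<in>D. \<forall>y\<in>D. f (addD x y) = f x \<oplus>\<^bsub>R\<^esub> f y) \<and>
     (\<forall>a\<in>carrier R. \<forall>x\<in>D. f (smulD a x) = a \<otimes>\<^bsub>R\<^esub> f x)"

definition dual :: "('a, 'b) ring_scheme \<Rightarrow> ('a, 'm) module \<Rightarrow> ('m \<Rightarrow> 'a) set" where
  "dual R M = {\<phi> \<in> extensional (carrier M).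
      lin_to_ring R (carrier M) (\<lambda>x y. x \<oplus>\<^bsub>M\<^esub> y) (\<lambda>a x. a \<odot>\<^bsub>M\<^esub> x) \<phi>}"

definition dual_add :: "('a, 'b) ring_scheme \<Rightarrow> ('a, 'm) module \<Rightarrow> ('m \<Rightarrow> 'a) \<Rightarrow> ('m \<Rightarrow> 'a) \<Rightarrow> ('m \<Rightarrow> 'a)" where
  "dual_add R M \<phi> \<chi> = (\<lambda>m\<in>carrier M. \<phi> m \<oplus>\<^bsub>R\<^esub> \<chi> m)"

definition dual_smult :: "('a, 'b) ring_scheme \<Rightarrow> ('a, 'm) module \<Rightarrow> 'a \<Rightarrow> ('m \<Rightarrow> 'a) \<Rightarrow> ('m \<Rightarrow> 'a)" where
  "dual_smult R M a \<phi> = (\<lambda>m\<in>carrier M. a \<otimes>\<^bsub>R\<^esub> \<phi> m)"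

definition ddual :: "('a, 'b) ring_scheme \<Rightarrow> ('a, 'm) module \<Rightarrow> (('m \<Rightarrow> 'a) \<Rightarrow> 'a) set" where
  "ddual R M = {\<psi> \<in> extensional (dual R M).
      lin_to_ring R (dual R M) (dual_add R M) (dual_smult R M) \<psi>}"

definition ddual_smult :: "('a, 'b) ring_scheme \<Rightarrow> ('a, 'm) module \<Rightarrow> 'a \<Rightarrow> (('m \<Rightarrow> 'a) \<Rightarrow> 'a) \<Rightarrow> (('m \<Rightarrow> 'a) \<Rightarrow> 'a)" where
  "ddual_smult R M a \<psi> = (\<lambda>\<phi>\<in>dual R M. a \<otimes>\<^bsub>R\<^esub> \<psi> \<phi>)"

definition can_map :: "('a, 'b) ring_scheme \<Rightarrow> ('a, 'm) module \<Rightarrow> 'm \<Rightarrow> (('m \<Rightarrow> 'a) \<Rightarrow> 'a)" where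
  "can_map R M m = (\<lambda>\<phi>\<in>dual R M. \<phi> m)"

end

theory Submission
  imports Defs
begin

context cring
begin

lemma pair_add:
  assumes "\<forall>i. a i \<in> carrier R" "\<forall>i. v i \<in> carrier R" "\<forall>i. w i \<in> carrier R"
  shows "finsum R (\<lambda>i. a i \<otimes> (v i \<oplus> w i)) {..<k::nat} =
     finsum R (\<lambda>i. a i \<otimes> v i) {..<k} \<oplus> finsum R (\<lambda>i. a i \<otimes> w i) {..<k}"
proof -
  have "finsum R (\<lambda>i. a i \<otimes> (v i \<oplus> w i)) {..<k} = finsum R (\<lambda>i. a i \<otimes> v i \<oplus> a i \<otimes> w i) {..<k}"
    using assms by (intro finsum_cong) (auto simp: r_distr)
  also have "\<dots> = finsum R (\<lambda>i. a i \<otimes> v i) {..<k} \<oplus> finsum R (\<lambda>i. a i \<otimes> w i) {..<k}"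
    using assms by (intro finsum_addf) auto
  finally show ?thesis .
qed

lemma pair_smult:
  assumes "\<forall>i. a i \<in> carrier R" "\<forall>i. v i \<in> carrier R" "r \<in> carrier R"
  shows "finsum R (\<lambda>i. a i \<otimes> (r \<otimes> v i)) {..<k::nat} = r \<otimes> finsum R (\<lambda>i. a i \<otimes> v i) {..<k}"
proof -
  have "finsum R (\<lambda>i. a i \<otimes> (r \<otimes> v i)) {..<k} = finsum R (\<lambda>i. r \<otimes> (a i \<otimes> v i)) {..<k}"
    using assms by (intro finsum_cong) (auto simp: m_lcomm)
  also have "\<dots> = r \<otimes> finsum R (\<lambda>i. a i \<otimes> v i) {..<k}"
    using assms by (intro finsum_rdistr[symmetric]) auto
  finally show ?thesis .
qed

lemma pair_closed:
  assumes "\<forall>i. a i \<in> carrier R" "\<forall>i. v i \<in> carrier R"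
  shows "finsum R (\<lambda>i. a i \<otimes> v i) {..<k} \<in> carrier R"
  using assms by (intro finsum_closed) auto

lemma ext_vec:
  fixes k :: nat
  assumes S1: "\<forall>x\<in>S. \<forall>y\<in>S. x \<otimes> y \<in> S" and S2: "S \<subseteq> carrier R" and S3: "\<one> \<in> S"
  and F2: "\<And>I \<theta>. I \<subseteq> carrier R \<Longrightarrow> (\<forall>x\<in>I. \<forall>y\<in>I. x \<oplus> y \<in> I) \<Longrightarrow>
     (\<forall>r\<in>carrier R. \<forall>x\<in>I. r \<otimes> x \<in> I) \<Longrightarrow> \<theta> \<in> I \<rightarrow> carrier R \<Longrightarrow>
     (\<forall>x\<in>I. \<forall>y\<in>I. \<theta> (x \<oplus> y) = \<theta> x \<oplus> \<theta> y) \<Longrightarrow>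
     (\<forall>r\<in>carrier R. \<forall>x\<in>I. \<theta> (r \<otimes> x) = r \<otimes> \<theta> x) \<Longrightarrow>
     \<exists>c\<in>S. \<exists>b\<in>carrier R. \<forall>x\<in>I. c \<otimes> \<theta> x = b \<otimes> x"
  shows "\<And>V \<psi>. V \<subseteq> {v. \<forall>i. v i \<in> carrier R} \<Longrightarrow> (\<forall>v\<in>V. \<forall>i\<ge>k. v i = \<zero>) \<Longrightarrow>
    (\<forall>v\<in>V. \<forall>w\<in>V. (\<lambda>i. v i \<oplus> w i) \<in> V) \<Longrightarrow> (\<forall>r\<in>carrier R. \<forall>v\<in>V. (\<lambda>i. r \<otimes> v i) \<in> V) \<Longrightarrow>
    \<psi> \<in> V \<rightarrow> carrier R \<Longrightarrow> (\<forall>v\<in>V. \<forall>w\<in>V. \<psi> (\<lambda>i. v i \<oplus> w i) = \<psi> v \<oplus> \<psi> w) \<Longrightarrow>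
    (\<forall>r\<in>carrier R. \<forall>v\<in>V. \<psi> (\<lambda>i. r \<otimes> v i) = r \<otimes> \<psi> v) \<Longrightarrow>
    \<exists>c\<in>S. \<exists>a. (\<forall>i. a i \<in> carrier R) \<and> (\<forall>v\<in>V. c \<otimes> \<psi> v = finsum R (\<lambda>i. a i \<otimes> v i) {..<k})"
proof (induction k)
  case 0
  show ?case
  proof (intro bexI[OF _ S3] exI[of _ "\<lambda>i. \<zero>"] conjI ballI)
    fix v assume v: "v \<in> V"
    have vz: "v = (\<lambda>i. \<zero>)" using 0(2) v by auto
    have "(\<lambda>i. v i \<oplus> v i) = v" using vz by auto
    moreover have "\<psi> (\<lambda>i. v i \<oplus> v i) = \<psi> v \<oplus> \<psi> v" using 0(6) v by blast
    ultimately have "\<psi> v = \<psi> v \<oplus> \<psi> v" by simp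
    moreover have "\<psi> v \<in> carrier R" using 0(5) v by blast
    ultimately have "\<psi> v = \<zero>" using add.l_cancel_one'[of "\<psi> v" "\<psi> v"] by simp
    then show "\<one> \<otimes> \<psi> v = finsum R (\<lambda>i. \<zero> \<otimes> v i) {..<0}" by simp
  qed auto
next
  case (Suc k)
  define V' where "V' = {v\<in>V. v k = \<zero>}"
  have "\<exists>c\<in>S. \<exists>a. (\<forall>i. a i \<in> carrier R) \<and> (\<forall>v\<in>V'. c \<otimes> \<psi> v = finsum R (\<lambda>i. a i \<otimes> v i) {..<k})"
  proof (rule Suc.IH)
    show "V' \<subseteq> {v. \<forall>i. v i \<in> carrier R}" using Suc.prems(1) V'_def by auto
    show "\<forall>v\<in>V'. \<forall>i\<ge>k. v i = \<zero>"
    proof (intro ballI allI impI)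
      fix v i assume "v \<in> V'" "k \<le> i"
      then show "v i = \<zero>" using Suc.prems(2) V'_def by (cases "i = k") auto
    qed
    show "\<forall>v\<in>V'. \<forall>w\<in>V'. (\<lambda>i. v i \<oplus> w i) \<in> V'" using Suc.prems(3) V'_def by auto
    show "\<forall>r\<in>carrier R. \<forall>v\<in>V'. (\<lambda>i. r \<otimes> v i) \<in> V'" using Suc.prems(4) V'_def by auto
    show "\<psi> \<in> V' \<rightarrow> carrier R" using Suc.prems(5) V'_def by auto
    show "\<forall>v\<in>V'. \<forall>w\<in>V'. \<psi> (\<lambda>i. v i \<oplus> w i) = \<psi> v \<oplus> \<psi> w" using Suc.prems(6) V'_def by auto
    show "\<forall>r\<in>carrier R. \<forall>v\<in>V'. \<psi> (\<lambda>i. r \<otimes> v i) = r \<otimes> \<psi> v" using Suc.prems(7) V'_def by auto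
  qed
  then obtain c1 a' where c1: "c1 \<in> S" and a': "\<forall>i. a' i \<in> carrier R"
    and IH: "\<forall>v\<in>V'. c1 \<otimes> \<psi> v = finsum R (\<lambda>i. a' i \<otimes> v i) {..<k}" by blast
  have c1c: "c1 \<in> carrier R" using c1 S2 by auto
  define P where "P v = finsum R (\<lambda>i. a' i \<otimes> v i) {..<k}" for v
  define \<chi> where "\<chi> v = c1 \<otimes> \<psi> v \<ominus> P v" for v
  have vc: "\<forall>i. v i \<in> carrier R" if "v \<in> V" for v using that Suc.prems(1) by auto
  have Pc: "P v \<in> carrier R" if "v \<in> V" for v unfolding P_def using a' vc[OF that] by (rule pair_closed)
  have \<psi>c: "\<psi> v \<in> carrier R" if "v \<in> V" for v using that Suc.prems(5) by auto
  have \<chi>c: "\<chi> v \<in> carrier R" if "v \<in> V" for v unfolding \<chi>_def using Pc[OF that] \<psi>c[OF that] c1c by simp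
  have \<chi>add: "\<chi> (\<lambda>i. v i \<oplus> w i) = \<chi> v \<oplus> \<chi> w" if "v \<in> V" "w \<in> V" for v w
  proof -
    have "P (\<lambda>i. v i \<oplus> w i) = P v \<oplus> P w" unfolding P_def using a' vc that by (intro pair_add) auto
    moreover have "\<psi> (\<lambda>i. v i \<oplus> w i) = \<psi> v \<oplus> \<psi> w" using Suc.prems(6) that by auto
    ultimately show ?thesis unfolding \<chi>_def using Pc \<psi>c that c1c by algebra
  qed
  have \<chi>sm: "\<chi> (\<lambda>i. r \<otimes> v i) = r \<otimes> \<chi> v" if "v \<in> V" "r \<in> carrier R" for v r
  proof -
    have "P (\<lambda>i. r \<otimes> v i) = r \<otimes> P v" unfolding P_def using a' vc that by (intro pair_smult) auto
    moreover have "\<psi> (\<lambda>i. r \<otimes> v i) = r \<otimes> \<psi> v" using Suc.prems(7) that by auto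
    ultimately show ?thesis unfolding \<chi>_def using Pc \<psi>c that c1c by algebra
  qed
  have key: "\<chi> v = \<chi> w" if "v \<in> V" "w \<in> V" "v k = w k" for v w
  proof -
    define z where "z = (\<lambda>i. v i \<oplus> (\<ominus>\<one> \<otimes> w i))"
    have z1: "(\<lambda>i. \<ominus>\<one> \<otimes> w i) \<in> V" using Suc.prems(4) that by auto
    have zV: "z \<in> V" unfolding z_def using Suc.prems(3) that z1 by auto
    have "z k = \<zero>" unfolding z_def using that vc by (simp add: l_minus r_neg)
    then have "z \<in> V'" using zV unfolding V'_def by simp
    then have "c1 \<otimes> \<psi> z = P z" using IH unfolding P_def by blast
    then have "\<chi> z = \<zero>" using Pc[OF zV] by (simp add: \<chi>_def a_minus_def r_neg)
    moreover have "\<chi> z = \<chi> v \<oplus> \<ominus>\<one> \<otimes> \<chi> w"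
    proof -
      have "\<chi> z = \<chi> v \<oplus> \<chi> (\<lambda>i. \<ominus>\<one> \<otimes> w i)" unfolding z_def using \<chi>add[OF that(1) z1] by simp
      also have "\<chi> (\<lambda>i. \<ominus>\<one> \<otimes> w i) = \<ominus>\<one> \<otimes> \<chi> w" by (rule \<chi>sm[OF that(2)]) simp
      finally show ?thesis .
    qed
    moreover have "\<chi> v = (\<chi> v \<oplus> \<ominus>\<one> \<otimes> \<chi> w) \<oplus> \<chi> w" using \<chi>c that by algebra
    ultimately show ?thesis using \<chi>c that by simp
  qed
  define I where "I = (\<lambda>v. v k) ` V"
  define sel where "sel x = (SOME v. v \<in> V \<and> v k = x)" for x
  have sel: "sel x \<in> V \<and> sel x k = x" if "x \<in> I" for x
  proof -
    have "\<exists>v. v \<in> V \<and> v k = x" using that unfolding I_def by blast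
    then show ?thesis unfolding sel_def by (rule someI_ex)
  qed
  define \<theta> where "\<theta> x = \<chi> (sel x)" for x
  have \<theta>v: "\<theta> (v k) = \<chi> v" if "v \<in> V" for v
  proof -
    have "v k \<in> I" using that I_def by blast
    then have "sel (v k) \<in> V" "sel (v k) k = v k" using sel by auto
    then show ?thesis unfolding \<theta>_def using key[of "sel (v k)" v] that by blast
  qed
  have "\<exists>c\<in>S. \<exists>b\<in>carrier R. \<forall>x\<in>I. c \<otimes> \<theta> x = b \<otimes> x"
  proof (rule F2)
    show "I \<subseteq> carrier R" using I_def vc by auto
    show "\<forall>x\<in>I. \<forall>y\<in>I. x \<oplus> y \<in> I"
    proof (intro ballI)
      fix x y assume "x \<in> I" "y \<in> I"
      then obtain v w where vw: "v \<in> V" "w \<in> V" "x = v k" "y = w k" unfolding I_def by blast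
      then have "(\<lambda>i. v i \<oplus> w i) \<in> V" using Suc.prems(3) by blast
      then have "(\<lambda>i. v i \<oplus> w i) k \<in> I" unfolding I_def by (rule imageI)
      then show "x \<oplus> y \<in> I" using vw by simp
    qed
    show "\<forall>r\<in>carrier R. \<forall>x\<in>I. r \<otimes> x \<in> I"
    proof (intro ballI)
      fix r x assume "r \<in> carrier R" "x \<in> I"
      then obtain v where vw: "v \<in> V" "x = v k" unfolding I_def by blast
      then have "(\<lambda>i. r \<otimes> v i) \<in> V" using Suc.prems(4) \<open>r \<in> carrier R\<close> by blast
      then have "(\<lambda>i. r \<otimes> v i) k \<in> I" unfolding I_def by (rule imageI)
      then show "r \<otimes> x \<in> I" using vw by simp
    qed
    show "\<theta> \<in> I \<rightarrow> carrier R"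
    proof
      fix x assume "x \<in> I"
      then obtain v where "v \<in> V" "x = v k" unfolding I_def by blast
      then show "\<theta> x \<in> carrier R" using \<theta>v \<chi>c by simp
    qed
    show "\<forall>x\<in>I. \<forall>y\<in>I. \<theta> (x \<oplus> y) = \<theta> x \<oplus> \<theta> y"
    proof (intro ballI)
      fix x y assume "x \<in> I" "y \<in> I"
      then obtain v w where "v \<in> V" "w \<in> V" "x = v k" "y = w k" using I_def by auto
      moreover have "(\<lambda>i. v i \<oplus> w i) \<in> V" using Suc.prems(3) calculation by auto
      ultimately show "\<theta> (x \<oplus> y) = \<theta> x \<oplus> \<theta> y" using \<theta>v[of "(\<lambda>i. v i \<oplus> w i)"] \<theta>v \<chi>add by auto
    qed
    show "\<forall>r\<in>carrier R. \<forall>x\<in>I. \<theta> (r \<otimes> x) = r \<otimes> \<theta> x"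
    proof (intro ballI)
      fix r x assume "r \<in> carrier R" "x \<in> I"
      then obtain v where "v \<in> V" "x = v k" using I_def by auto
      moreover have "(\<lambda>i. r \<otimes> v i) \<in> V" using Suc.prems(4) calculation \<open>r \<in> carrier R\<close> by auto
      ultimately show "\<theta> (r \<otimes> x) = r \<otimes> \<theta> x" using \<theta>v[of "(\<lambda>i. r \<otimes> v i)"] \<theta>v \<chi>sm \<open>r \<in> carrier R\<close> by auto
    qed
  qed
  then obtain c2 b where c2: "c2 \<in> S" and b: "b \<in> carrier R" and cb: "\<forall>x\<in>I. c2 \<otimes> \<theta> x = b \<otimes> x" by blast
  have c2c: "c2 \<in> carrier R" using c2 S2 by auto
  define a where "a i = (if i < k then c2 \<otimes> a' i else if i = k then b else \<zero>)" for i
  show ?case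
  proof (intro bexI[of _ "c2 \<otimes> c1"] exI[of _ a] conjI ballI allI)
    show "a i \<in> carrier R" for i unfolding a_def using a' b c2c by auto
    show "c2 \<otimes> c1 \<in> S" using S1 c1 c2 by auto
    fix v assume v: "v \<in> V"
    have "finsum R (\<lambda>i. a i \<otimes> v i) {..<Suc k} = finsum R (\<lambda>i. a i \<otimes> v i) {..<k} \<oplus> a k \<otimes> v k"
      using vc[OF v] \<open>\<And>i. a i \<in> carrier R\<close> by (simp add: lessThan_Suc finsum_insert add.m_comm)
    also have "finsum R (\<lambda>i. a i \<otimes> v i) {..<k} = finsum R (\<lambda>i. c2 \<otimes> (a' i \<otimes> v i)) {..<k}"
      using vc[OF v] a' c2c by (intro finsum_cong) (auto simp: a_def m_assoc)
    also have "\<dots> = c2 \<otimes> P v" unfolding P_def using vc[OF v] a' c2c by (intro finsum_rdistr[symmetric]) auto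
    also have "a k \<otimes> v k = c2 \<otimes> \<chi> v" using cb \<theta>v[OF v] v I_def by (auto simp: a_def)
    finally have "finsum R (\<lambda>i. a i \<otimes> v i) {..<Suc k} = c2 \<otimes> P v \<oplus> c2 \<otimes> \<chi> v" .
    then show "c2 \<otimes> c1 \<otimes> \<psi> v = finsum R (\<lambda>i. a i \<otimes> v i) {..<Suc k}"
      unfolding \<chi>_def using Pc[OF v] \<psi>c[OF v] c1c c2c by algebra
  qed
qed

end


lemma Rn_carrier: "carrier (Rn n) = {p. degree p < n}" by (simp add: Rn_def)
lemma Rn_mult: "p \<otimes>\<^bsub>Rn n\<^esub> q = trunc_poly n (p * q)" by (simp add: Rn_def)
lemma Rn_add: "p \<oplus>\<^bsub>Rn n\<^esub> q = p + q" by (simp add: Rn_def)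
lemma Rn_zero: "\<zero>\<^bsub>Rn n\<^esub> = 0" by (simp add: Rn_def)
lemma Rn_one: "\<one>\<^bsub>Rn n\<^esub> = 1" by (simp add: Rn_def)

lemma coeff_trunc: "coeff (trunc_poly n p) i = (if i < n then coeff p i else 0)"
  by (simp add: trunc_poly_def coeff_sum coeff_monom)

lemma trunc_id: "degree p < n \<Longrightarrow> trunc_poly n p = p"
  by (auto simp: poly_eq_iff coeff_trunc coeff_eq_0)

lemma degree_shift_less: "degree x < n \<Longrightarrow> n \<ge> 1 \<Longrightarrow> degree (poly_shift j x) < n"
proof -
  assume a: "degree x < n" "n \<ge> 1"
  have "degree (poly_shift j x) \<le> degree x"
    by (rule degree_le) (auto simp: coeff_poly_shift coeff_eq_0)
  then show ?thesis using a by simp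
qed

lemma decomp:
  assumes "degree x < n" "\<forall>i<j. coeff x i = 0"
  shows "x = monom 1 j \<otimes>\<^bsub>Rn n\<^esub> poly_shift j x"
  using assms by (auto simp: Rn_mult poly_eq_iff coeff_trunc coeff_monom_mult coeff_poly_shift coeff_eq_0)

lemma coeff_mult_low:
  fixes u w :: "'a::comm_ring_1 poly"
  assumes "\<forall>i<m. coeff w i = 0"
  shows "coeff (u * w) m = coeff u 0 * coeff w m"
proof -
  have "coeff (u * w) m = (\<Sum>i\<le>m. coeff u i * coeff w (m-i))" by (rule coeff_mult)
  also have "\<dots> = (\<Sum>i\<le>m. if i = 0 then coeff u 0 * coeff w m else 0)"
    using assms by (intro sum.cong) auto
  also have "\<dots> = coeff u 0 * coeff w m" by simp
  finally show ?thesis .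
qed

lemma trunc_nonzero:
  fixes u w :: "'a::idom poly"
  assumes "coeff u 0 \<noteq> 0" "w \<noteq> 0" "degree w < n"
  shows "trunc_poly n (u * w) \<noteq> 0"
proof -
  have ex: "\<exists>m. coeff w m \<noteq> 0" using assms(2) leading_coeff_neq_0 by blast
  define m where "m = (LEAST m. coeff w m \<noteq> 0)"
  have wm: "coeff w m \<noteq> 0" unfolding m_def using LeastI_ex[OF ex] .
  have low: "\<forall>i<m. coeff w i = 0" unfolding m_def using not_less_Least by blast
  have "m \<le> degree w" using wm le_degree by blast
  then have mn: "m < n" using assms(3) by simp
  have "coeff (trunc_poly n (u * w)) m = coeff u 0 * coeff w m"
    using mn coeff_mult_low[OF low] by (simp add: coeff_trunc)
  also have "\<dots> \<noteq> 0" using assms(1) wm by simp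
  finally show ?thesis by auto
qed

lemma one_nzd: "n \<ge> 1 \<Longrightarrow> (1::'a::idom poly) \<in> nzd n"
  by (auto simp: nzd_def Rn_carrier Rn_mult Rn_zero trunc_id)

lemma shift_nzd:
  fixes u :: "'a::idom poly"
  assumes "coeff u 0 \<noteq> 0" "degree u < n"
  shows "u \<in> nzd n"
  using assms trunc_nonzero[OF assms(1)] by (auto simp: nzd_def Rn_carrier Rn_mult Rn_zero)

lemma nzd_mult:
  fixes u v :: "'a::comm_ring_1 poly"
  assumes cr: "cring (Rn n :: 'a poly ring)" and u: "u \<in> nzd n" and v: "v \<in> nzd n"
  shows "u \<otimes>\<^bsub>Rn n\<^esub> v \<in> nzd n"
proof -
  interpret A: cring "Rn n :: 'a poly ring" by (rule cr)
  have uc: "u \<in> carrier (Rn n)" and vc: "v \<in> carrier (Rn n)" using u v by (auto simp: nzd_def)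
  show ?thesis unfolding nzd_def
  proof (intro CollectI conjI ballI impI)
    show "u \<otimes>\<^bsub>Rn n\<^esub> v \<in> carrier (Rn n)" using uc vc by simp
    fix w assume w: "w \<in> carrier (Rn n)" and z: "u \<otimes>\<^bsub>Rn n\<^esub> v \<otimes>\<^bsub>Rn n\<^esub> w = \<zero>\<^bsub>Rn n\<^esub>"
    have "u \<otimes>\<^bsub>Rn n\<^esub> (v \<otimes>\<^bsub>Rn n\<^esub> w) = \<zero>\<^bsub>Rn n\<^esub>" using z uc vc w by (simp add: A.m_assoc)
    then have "v \<otimes>\<^bsub>Rn n\<^esub> w = \<zero>\<^bsub>Rn n\<^esub>" using u vc w by (auto simp: nzd_def)
    then show "w = \<zero>\<^bsub>Rn n\<^esub>" using v w by (auto simp: nzd_def)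
  qed
qed

lemma F2:
  fixes I :: "'a::idom poly set" and \<theta> :: "'a poly \<Rightarrow> 'a poly"
  assumes n: "n \<ge> 1" and cr: "cring (Rn n :: 'a poly ring)"
    and Ic: "I \<subseteq> carrier (Rn n)" and Iadd: "\<forall>x\<in>I. \<forall>y\<in>I. x \<oplus>\<^bsub>Rn n\<^esub> y \<in> I"
    and Ism: "\<forall>r\<in>carrier (Rn n). \<forall>x\<in>I. r \<otimes>\<^bsub>Rn n\<^esub> x \<in> I"
    and \<theta>c: "\<theta> \<in> I \<rightarrow> carrier (Rn n)"
    and \<theta>add: "\<forall>x\<in>I. \<forall>y\<in>I. \<theta> (x \<oplus>\<^bsub>Rn n\<^esub> y) = \<theta> x \<oplus>\<^bsub>Rn n\<^esub> \<theta> y"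
    and \<theta>sm: "\<forall>r\<in>carrier (Rn n). \<forall>x\<in>I. \<theta> (r \<otimes>\<^bsub>Rn n\<^esub> x) = r \<otimes>\<^bsub>Rn n\<^esub> \<theta> x"
  shows "\<exists>c\<in>nzd n. \<exists>b\<in>carrier (Rn n). \<forall>x\<in>I. c \<otimes>\<^bsub>Rn n\<^esub> \<theta> x = b \<otimes>\<^bsub>Rn n\<^esub> x"
proof (cases "\<forall>x\<in>I. x = 0")
  case True
  show ?thesis
  proof (intro bexI[OF _ one_nzd[OF n]] bexI[of _ 0] ballI)
    fix x assume x: "x \<in> I"
    then have x0: "x = 0" using True by blast
    have "\<theta> (0 + 0) = \<theta> 0 + \<theta> 0" using \<theta>add x[unfolded x0] unfolding Rn_add by blast
    then have "\<theta> 0 = 0" by (metis add.right_neutral add_left_cancel)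
    then show "1 \<otimes>\<^bsub>Rn n\<^esub> \<theta> x = 0 \<otimes>\<^bsub>Rn n\<^esub> x" using x0 by (simp add: Rn_mult trunc_poly_def)
  qed (use n in \<open>simp add: Rn_carrier\<close>)
next
  case False
  interpret A: cring "Rn n :: 'a poly ring" by (rule cr)
  have ex: "\<exists>j. \<exists>x\<in>I. coeff x j \<noteq> 0" using False by (auto simp: poly_eq_iff)
  define j where "j = (LEAST j. \<exists>x\<in>I. coeff x j \<noteq> 0)"
  obtain v0 where v0I: "v0 \<in> I" and v0j: "coeff v0 j \<noteq> 0"
    using LeastI_ex[OF ex] unfolding j_def by blast
  have low: "\<forall>x\<in>I. \<forall>i<j. coeff x i = 0"
    unfolding j_def using not_less_Least by blast
  have v0c: "v0 \<in> carrier (Rn n)" using v0I Ic by blast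
  have "j \<le> degree v0" using v0j le_degree by blast
  then have jn: "j < n" using v0c by (simp add: Rn_carrier)
  have Icar: "degree x < n" if "x \<in> I" for x using that Ic by (auto simp: Rn_carrier)
  define u where "u = poly_shift j v0"
  have uc: "u \<in> carrier (Rn n)" unfolding u_def using degree_shift_less[OF Icar[OF v0I] n] by (simp add: Rn_carrier)
  have unzd: "u \<in> nzd n" using shift_nzd[of u n] v0j uc by (simp add: u_def coeff_poly_shift Rn_carrier)
  define tj where "tj = (monom 1 j :: 'a poly)"
  have tjc: "tj \<in> carrier (Rn n)" using jn by (simp add: tj_def Rn_carrier degree_monom_eq)
  have dec: "x = tj \<otimes>\<^bsub>Rn n\<^esub> poly_shift j x" if "x \<in> carrier (Rn n)" "\<forall>i<j. coeff x i = 0" for x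
    unfolding tj_def using that by (intro decomp) (auto simp: Rn_carrier)
  have shc: "poly_shift j x \<in> carrier (Rn n)" if "x \<in> carrier (Rn n)" for x
    using that degree_shift_less[OF _ n] by (auto simp: Rn_carrier)
  have v0dec: "v0 = tj \<otimes>\<^bsub>Rn n\<^esub> u" unfolding u_def using dec v0c low v0I by blast
  have zI: "0 \<in> I" using Ism v0I by (metis A.l_null A.zero_closed Rn_zero v0c)
  have \<theta>0: "\<theta> 0 = 0"
  proof -
    have "\<theta> (0 + 0) = \<theta> 0 + \<theta> 0" using \<theta>add zI unfolding Rn_add by blast
    then show ?thesis by (metis add.right_neutral add_left_cancel)
  qed
  have \<theta>v0c: "\<theta> v0 \<in> carrier (Rn n)" using \<theta>c v0I by blast
  have \<theta>low: "\<forall>i<j. coeff (\<theta> v0) i = 0"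
  proof (cases "j = 0")
    case False
    define s where "s = (monom 1 (n - j) :: 'a poly)"
    have sc: "s \<in> carrier (Rn n)" using False jn by (simp add: s_def Rn_carrier degree_monom_eq)
    have "s \<otimes>\<^bsub>Rn n\<^esub> v0 = 0"
      using low v0I by (auto simp: s_def Rn_mult poly_eq_iff coeff_trunc coeff_monom_mult)
    then have "s \<otimes>\<^bsub>Rn n\<^esub> \<theta> v0 = 0" using \<theta>sm sc v0I \<theta>0 by metis
    then have "trunc_poly n (s * \<theta> v0) = 0" by (simp add: Rn_mult)
    show ?thesis
    proof (intro allI impI)
      fix i assume "i < j"
      then have "coeff (trunc_poly n (s * \<theta> v0)) (i + (n - j)) = coeff (\<theta> v0) i"
        using jn by (simp add: coeff_trunc s_def coeff_monom_mult) arith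
      then show "coeff (\<theta> v0) i = 0" using \<open>trunc_poly n (s * \<theta> v0) = 0\<close> by simp
    qed
  qed simp
  define b where "b = poly_shift j (\<theta> v0)"
  have bc: "b \<in> carrier (Rn n)" unfolding b_def using shc \<theta>v0c by blast
  have \<theta>v0dec: "\<theta> v0 = tj \<otimes>\<^bsub>Rn n\<^esub> b" unfolding b_def using dec \<theta>v0c \<theta>low by blast
  show ?thesis
  proof (intro bexI[OF _ unzd] bexI[OF _ bc] ballI)
    fix x assume xI: "x \<in> I"
    have xc: "x \<in> carrier (Rn n)" using xI Ic by blast
    define w where "w = poly_shift j x"
    have wc: "w \<in> carrier (Rn n)" unfolding w_def using shc xc by blast
    have xdec: "x = tj \<otimes>\<^bsub>Rn n\<^esub> w" unfolding w_def using dec xc low xI by blast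
    have "u \<otimes>\<^bsub>Rn n\<^esub> x = w \<otimes>\<^bsub>Rn n\<^esub> v0"
      using xdec v0dec uc wc tjc by (simp add: A.m_ac)
    have "u \<otimes>\<^bsub>Rn n\<^esub> \<theta> x = \<theta> (u \<otimes>\<^bsub>Rn n\<^esub> x)" using \<theta>sm uc xI by simp
    also have "\<dots> = \<theta> (w \<otimes>\<^bsub>Rn n\<^esub> v0)" by (simp add: \<open>u \<otimes>\<^bsub>Rn n\<^esub> x = w \<otimes>\<^bsub>Rn n\<^esub> v0\<close>)
    also have "\<dots> = w \<otimes>\<^bsub>Rn n\<^esub> \<theta> v0" using \<theta>sm wc v0I by simp
    also have "\<dots> = b \<otimes>\<^bsub>Rn n\<^esub> x" using \<theta>v0dec xdec bc tjc wc by (simp add: A.m_ac)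
    finally show "u \<otimes>\<^bsub>Rn n\<^esub> \<theta> x = b \<otimes>\<^bsub>Rn n\<^esub> x" .
  qed
qed


lemma dual_finsum:
  assumes mo: "Module.module R M" and \<phi>: "\<phi> \<in> dual R M" and J: "finite J"
  shows "f \<in> J \<rightarrow> carrier M \<Longrightarrow> \<phi> (finsum M f J) = finsum R (\<lambda>i. \<phi> (f i)) J"
  using J
proof (induction J rule: finite_induct)
  interpret Module.module R M by (rule mo)
  have \<phi>c: "\<phi> \<in> carrier M \<rightarrow> carrier R" and \<phi>add: "\<forall>x\<in>carrier M. \<forall>y\<in>carrier M. \<phi> (x \<oplus>\<^bsub>M\<^esub> y) = \<phi> x \<oplus>\<^bsub>R\<^esub> \<phi> y"
    using \<phi> by (auto simp: dual_def lin_to_ring_def)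
  {
    case empty
    have "\<phi> (\<zero>\<^bsub>M\<^esub> \<oplus>\<^bsub>M\<^esub> \<zero>\<^bsub>M\<^esub>) = \<phi> \<zero>\<^bsub>M\<^esub> \<oplus>\<^bsub>R\<^esub> \<phi> \<zero>\<^bsub>M\<^esub>" using \<phi>add M.zero_closed by blast
    then have "\<phi> \<zero>\<^bsub>M\<^esub> = \<phi> \<zero>\<^bsub>M\<^esub> \<oplus>\<^bsub>R\<^esub> \<phi> \<zero>\<^bsub>M\<^esub>" by simp
    moreover have "\<phi> \<zero>\<^bsub>M\<^esub> \<in> carrier R" using \<phi>c by auto
    ultimately have "\<phi> \<zero>\<^bsub>M\<^esub> = \<zero>\<^bsub>R\<^esub>" using R.add.l_cancel_one'[of "\<phi> \<zero>\<^bsub>M\<^esub>" "\<phi> \<zero>\<^bsub>M\<^esub>"] by simp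
    then show ?case by simp
  next
    case (insert x F)
    have fx: "f x \<in> carrier M" and fF: "f \<in> F \<rightarrow> carrier M" using insert.prems by auto
    have "\<phi> (finsum M f (insert x F)) = \<phi> (f x \<oplus>\<^bsub>M\<^esub> finsum M f F)"
      using insert.hyps fx fF by (simp add: M.finsum_insert)
    also have "\<dots> = \<phi> (f x) \<oplus>\<^bsub>R\<^esub> \<phi> (finsum M f F)" using \<phi>add fx fF M.finsum_closed by blast
    also have "\<phi> (finsum M f F) = finsum R (\<lambda>i. \<phi> (f i)) F" using insert.IH fF by blast
    also have "\<phi> (f x) \<oplus>\<^bsub>R\<^esub> finsum R (\<lambda>i. \<phi> (f i)) F = finsum R (\<lambda>i. \<phi> (f i)) (insert x F)"
      using insert.hyps fx fF \<phi>c by (subst R.finsum_insert) (auto simp: Pi_def)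
    finally show ?case .
  }
qed

theorem proposition3p5p3:
  fixes n :: nat and M :: "('a::idom poly, 'm) module"
  assumes "noetherian_type TYPE('a)"
    and "n \<ge> 1"
    and "Module.module (Rn n) M"
    and "fin_gen_module (Rn n) M"
  shows "\<forall>\<psi>\<in>ddual (Rn n) M. \<exists>\<alpha>\<in>nzd n. \<exists>m\<in>carrier M.
           ddual_smult (Rn n) M \<alpha> \<psi> = can_map (Rn n) M m"
proof
  fix \<psi> assume \<psi>: "\<psi> \<in> ddual (Rn n) M"
  interpret Mo: Module.module "Rn n" M by (rule assms(3))
  have cr: "cring (Rn n :: 'a poly ring)" by (rule Mo.is_cring)
  obtain G where Gf: "finite G" and GM: "G \<subseteq> carrier M"
    and rep: "\<forall>x\<in>carrier M. \<exists>c\<in>G \<rightarrow> carrier (Rn n). x = finsum M (\<lambda>a. c a \<odot>\<^bsub>M\<^esub> a) G"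
    using assms(4) unfolding fin_gen_module_def by blast
  obtain h where "bij_betw h {0..<card G} G" using ex_bij_betw_nat_finite[OF Gf] by blast
  then have Gim: "G = h ` {..<card G}" by (simp add: bij_betw_def atLeast0LessThan)
  define k where "k = card G"
  have gM: "h i \<in> carrier M" if "i < k" for i using Gim GM that k_def by auto
  let ?A = "Rn n :: 'a poly ring"
  let ?D = "dual ?A M"
  have dE: "\<phi> \<in> extensional (carrier M)" "\<phi> \<in> carrier M \<rightarrow> carrier ?A"
    "\<forall>x\<in>carrier M. \<forall>y\<in>carrier M. \<phi> (x \<oplus>\<^bsub>M\<^esub> y) = \<phi> x \<oplus>\<^bsub>?A\<^esub> \<phi> y"
    "\<forall>a\<in>carrier ?A. \<forall>x\<in>carrier M. \<phi> (a \<odot>\<^bsub>M\<^esub> x) = a \<otimes>\<^bsub>?A\<^esub> \<phi> x" if "\<phi> \<in> ?D" for \<phi>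
    using that by (auto simp: dual_def lin_to_ring_def)
  have \<psi>E: "\<psi> \<in> ?D \<rightarrow> carrier ?A"
    "\<forall>x\<in>?D. \<forall>y\<in>?D. \<psi> (dual_add ?A M x y) = \<psi> x \<oplus>\<^bsub>?A\<^esub> \<psi> y"
    "\<forall>a\<in>carrier ?A. \<forall>x\<in>?D. \<psi> (dual_smult ?A M a x) = a \<otimes>\<^bsub>?A\<^esub> \<psi> x"
    using \<psi> by (auto simp: ddual_def lin_to_ring_def)
  define vec where "vec \<phi> = (\<lambda>i. if i < k then \<phi> (h i) else \<zero>\<^bsub>?A\<^esub>)" for \<phi> :: "'m \<Rightarrow> 'a poly"
  have inj: "\<phi>1 = \<phi>2" if d: "\<phi>1 \<in> ?D" "\<phi>2 \<in> ?D" and v: "vec \<phi>1 = vec \<phi>2" for \<phi>1 \<phi>2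
  proof
    fix x
    have onG: "\<phi>1 a = \<phi>2 a" if "a \<in> G" for a
    proof -
      obtain i where "i < k" "a = h i" using \<open>a \<in> G\<close> Gim k_def by auto
      then show ?thesis using fun_cong[OF v, of i] by (simp add: vec_def)
    qed
    show "\<phi>1 x = \<phi>2 x"
    proof (cases "x \<in> carrier M")
      case True
      then obtain c where c: "c \<in> G \<rightarrow> carrier ?A" and x: "x = finsum M (\<lambda>a. c a \<odot>\<^bsub>M\<^esub> a) G"
        using rep by blast
      have fc: "(\<lambda>a. c a \<odot>\<^bsub>M\<^esub> a) \<in> G \<rightarrow> carrier M" using c GM by auto
      have "\<phi>1 x = finsum ?A (\<lambda>a. \<phi>1 (c a \<odot>\<^bsub>M\<^esub> a)) G"
        unfolding x by (rule dual_finsum[OF assms(3) d(1) Gf fc])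
      also have "\<dots> = finsum ?A (\<lambda>a. \<phi>2 (c a \<odot>\<^bsub>M\<^esub> a)) G"
      proof (rule Mo.R.finsum_cong')
        show "(\<lambda>a. \<phi>2 (c a \<odot>\<^bsub>M\<^esub> a)) \<in> G \<rightarrow> carrier ?A" using fc dE(2)[OF d(2)] by auto
        show "\<phi>1 (c a \<odot>\<^bsub>M\<^esub> a) = \<phi>2 (c a \<odot>\<^bsub>M\<^esub> a)" if "a \<in> G" for a
        proof -
          have "c a \<in> carrier ?A" "a \<in> carrier M" using that c GM by auto
          then show ?thesis using onG[OF that] dE(4)[OF d(1)] dE(4)[OF d(2)] by simp
        qed
      qed simp
      also have "\<dots> = \<phi>2 x"
        unfolding x by (rule dual_finsum[OF assms(3) d(2) Gf fc, symmetric])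
      finally show ?thesis .
    next
      case False
      then show ?thesis using extensional_arb[OF dE(1)[OF d(1)] False] extensional_arb[OF dE(1)[OF d(2)] False] by simp
    qed
  qed
  have dc: "\<phi> x \<in> carrier ?A" if "\<phi> \<in> ?D" "x \<in> carrier M" for \<phi> x
    using dE(2)[OF that(1)] that(2) by (rule funcset_mem)
  have addD: "dual_add ?A M \<phi>1 \<phi>2 \<in> ?D" if d: "\<phi>1 \<in> ?D" "\<phi>2 \<in> ?D" for \<phi>1 \<phi>2
    unfolding dual_def lin_to_ring_def
  proof (intro CollectI conjI ballI)
    show "dual_add ?A M \<phi>1 \<phi>2 \<in> extensional (carrier M)" by (simp add: dual_add_def)
    show "dual_add ?A M \<phi>1 \<phi>2 \<in> carrier M \<rightarrow> carrier ?A" using dc d by (simp add: dual_add_def)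
    fix x y assume x: "x \<in> carrier M" and y: "y \<in> carrier M"
    have c: "\<phi>1 x \<in> carrier ?A" "\<phi>1 y \<in> carrier ?A" "\<phi>2 x \<in> carrier ?A" "\<phi>2 y \<in> carrier ?A"
      using dc d x y by auto
    show "dual_add ?A M \<phi>1 \<phi>2 (x \<oplus>\<^bsub>M\<^esub> y) = dual_add ?A M \<phi>1 \<phi>2 x \<oplus>\<^bsub>?A\<^esub> dual_add ?A M \<phi>1 \<phi>2 y"
      using x y dE(3)[OF d(1)] dE(3)[OF d(2)] c by (simp add: dual_add_def Mo.R.a_ac)
  next
    fix r x assume r: "r \<in> carrier ?A" and x: "x \<in> carrier M"
    have c: "\<phi>1 x \<in> carrier ?A" "\<phi>2 x \<in> carrier ?A" using dc d x by auto
    show "dual_add ?A M \<phi>1 \<phi>2 (r \<odot>\<^bsub>M\<^esub> x) = r \<otimes>\<^bsub>?A\<^esub> dual_add ?A M \<phi>1 \<phi>2 x"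
      using r x dE(4)[OF d(1)] dE(4)[OF d(2)] c by (simp add: dual_add_def Mo.R.r_distr)
  qed
  have smD: "dual_smult ?A M r \<phi> \<in> ?D" if d: "\<phi> \<in> ?D" and r: "r \<in> carrier ?A" for \<phi> r
    unfolding dual_def lin_to_ring_def
  proof (intro CollectI conjI ballI)
    show "dual_smult ?A M r \<phi> \<in> extensional (carrier M)" by (simp add: dual_smult_def)
    show "dual_smult ?A M r \<phi> \<in> carrier M \<rightarrow> carrier ?A" using dc d r by (simp add: dual_smult_def)
    fix x y assume x: "x \<in> carrier M" and y: "y \<in> carrier M"
    have c: "\<phi> x \<in> carrier ?A" "\<phi> y \<in> carrier ?A" using dc d x y by auto
    show "dual_smult ?A M r \<phi> (x \<oplus>\<^bsub>M\<^esub> y) = dual_smult ?A M r \<phi> x \<oplus>\<^bsub>?A\<^esub> dual_smult ?A M r \<phi> y"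
      using x y dE(3)[OF d] c r by (simp add: dual_smult_def Mo.R.r_distr)
  next
    fix s x assume s: "s \<in> carrier ?A" and x: "x \<in> carrier M"
    have c: "\<phi> x \<in> carrier ?A" using dc d x by auto
    show "dual_smult ?A M r \<phi> (s \<odot>\<^bsub>M\<^esub> x) = s \<otimes>\<^bsub>?A\<^esub> dual_smult ?A M r \<phi> x"
      using s x dE(4)[OF d] c r by (simp add: dual_smult_def Mo.R.m_lcomm)
  qed
  have vec_add: "vec (dual_add ?A M \<phi>1 \<phi>2) = (\<lambda>i. vec \<phi>1 i \<oplus>\<^bsub>?A\<^esub> vec \<phi>2 i)" for \<phi>1 \<phi>2
    by (auto simp: vec_def dual_add_def gM)
  have vec_sm: "vec (dual_smult ?A M r \<phi>) = (\<lambda>i. r \<otimes>\<^bsub>?A\<^esub> vec \<phi> i)" if "r \<in> carrier ?A" for \<phi> r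
    using that by (auto simp: vec_def dual_smult_def gM)
  define V where "V = vec ` ?D"
  define \<psi>' where "\<psi>' v = \<psi> (SOME \<phi>. \<phi> \<in> ?D \<and> vec \<phi> = v)" for v
  have \<psi>'v: "\<psi>' (vec \<phi>) = \<psi> \<phi>" if "\<phi> \<in> ?D" for \<phi>
  proof -
    have "\<exists>\<phi>'. \<phi>' \<in> ?D \<and> vec \<phi>' = vec \<phi>" using that by blast
    then have "(SOME \<phi>'. \<phi>' \<in> ?D \<and> vec \<phi>' = vec \<phi>) \<in> ?D \<and> vec (SOME \<phi>'. \<phi>' \<in> ?D \<and> vec \<phi>' = vec \<phi>) = vec \<phi>"
      by (rule someI_ex)
    then have "(SOME \<phi>'. \<phi>' \<in> ?D \<and> vec \<phi>' = vec \<phi>) = \<phi>" using inj that by blast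
    then show ?thesis unfolding \<psi>'_def by simp
  qed
  have "\<exists>c\<in>nzd n. \<exists>a. (\<forall>i. a i \<in> carrier ?A) \<and> (\<forall>v\<in>V. c \<otimes>\<^bsub>?A\<^esub> \<psi>' v = finsum ?A (\<lambda>i. a i \<otimes>\<^bsub>?A\<^esub> v i) {..<k})"
  proof (rule Mo.ext_vec)
    show "\<forall>x\<in>nzd n. \<forall>y\<in>nzd n. x \<otimes>\<^bsub>?A\<^esub> y \<in> nzd n" using nzd_mult[OF cr] by blast
    show "nzd n \<subseteq> carrier ?A" by (auto simp: nzd_def)
    show "\<one>\<^bsub>?A\<^esub> \<in> nzd n" using one_nzd[OF assms(2)] by (simp add: Rn_one)
    show "\<exists>c\<in>nzd n. \<exists>b\<in>carrier ?A. \<forall>x\<in>I. c \<otimes>\<^bsub>?A\<^esub> \<theta> x = b \<otimes>\<^bsub>?A\<^esub> x"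
      if "I \<subseteq> carrier ?A" "\<forall>x\<in>I. \<forall>y\<in>I. x \<oplus>\<^bsub>?A\<^esub> y \<in> I" "\<forall>r\<in>carrier ?A. \<forall>x\<in>I. r \<otimes>\<^bsub>?A\<^esub> x \<in> I"
        "\<theta> \<in> I \<rightarrow> carrier ?A" "\<forall>x\<in>I. \<forall>y\<in>I. \<theta> (x \<oplus>\<^bsub>?A\<^esub> y) = \<theta> x \<oplus>\<^bsub>?A\<^esub> \<theta> y"
        "\<forall>r\<in>carrier ?A. \<forall>x\<in>I. \<theta> (r \<otimes>\<^bsub>?A\<^esub> x) = r \<otimes>\<^bsub>?A\<^esub> \<theta> x" for I \<theta>
      by (rule F2[OF assms(2) cr that])
    show "V \<subseteq> {v. \<forall>i. v i \<in> carrier ?A}"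
      using dc gM by (auto simp: V_def vec_def)
    show "\<forall>v\<in>V. \<forall>i\<ge>k. v i = \<zero>\<^bsub>?A\<^esub>" by (auto simp: V_def vec_def)
    show "\<forall>v\<in>V. \<forall>w\<in>V. (\<lambda>i. v i \<oplus>\<^bsub>?A\<^esub> w i) \<in> V"
    proof (intro ballI)
      fix v w assume "v \<in> V" "w \<in> V"
      then obtain \<phi>1 \<phi>2 where d: "\<phi>1 \<in> ?D" "\<phi>2 \<in> ?D" "v = vec \<phi>1" "w = vec \<phi>2" unfolding V_def by blast
      then have "(\<lambda>i. v i \<oplus>\<^bsub>?A\<^esub> w i) = vec (dual_add ?A M \<phi>1 \<phi>2)" using vec_add by simp
      then show "(\<lambda>i. v i \<oplus>\<^bsub>?A\<^esub> w i) \<in> V" unfolding V_def using addD[OF d(1) d(2)] by (rule image_eqI)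
    qed
    show "\<forall>r\<in>carrier ?A. \<forall>v\<in>V. (\<lambda>i. r \<otimes>\<^bsub>?A\<^esub> v i) \<in> V"
    proof (intro ballI)
      fix r v assume r: "r \<in> carrier ?A" and "v \<in> V"
      then obtain \<phi> where d: "\<phi> \<in> ?D" "v = vec \<phi>" unfolding V_def by blast
      then have "(\<lambda>i. r \<otimes>\<^bsub>?A\<^esub> v i) = vec (dual_smult ?A M r \<phi>)" using vec_sm[OF r] by simp
      then show "(\<lambda>i. r \<otimes>\<^bsub>?A\<^esub> v i) \<in> V" unfolding V_def using smD[OF d(1) r] by (rule image_eqI)
    qed
    show "\<psi>' \<in> V \<rightarrow> carrier ?A"
    proof
      fix v assume "v \<in> V"
      then obtain \<phi> where d: "\<phi> \<in> ?D" "v = vec \<phi>" unfolding V_def by blast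
      then show "\<psi>' v \<in> carrier ?A" using \<psi>'v[OF d(1)] funcset_mem[OF \<psi>E(1) d(1)] by simp
    qed
    show "\<forall>v\<in>V. \<forall>w\<in>V. \<psi>' (\<lambda>i. v i \<oplus>\<^bsub>?A\<^esub> w i) = \<psi>' v \<oplus>\<^bsub>?A\<^esub> \<psi>' w"
    proof (intro ballI)
      fix v w assume "v \<in> V" "w \<in> V"
      then obtain \<phi>1 \<phi>2 where d: "\<phi>1 \<in> ?D" "\<phi>2 \<in> ?D" "v = vec \<phi>1" "w = vec \<phi>2" unfolding V_def by blast
      then show "\<psi>' (\<lambda>i. v i \<oplus>\<^bsub>?A\<^esub> w i) = \<psi>' v \<oplus>\<^bsub>?A\<^esub> \<psi>' w"
      proof -
        have "\<psi>' (\<lambda>i. v i \<oplus>\<^bsub>?A\<^esub> w i) = \<psi>' (vec (dual_add ?A M \<phi>1 \<phi>2))" using d vec_add by simp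
        also have "\<dots> = \<psi> (dual_add ?A M \<phi>1 \<phi>2)" by (rule \<psi>'v[OF addD[OF d(1) d(2)]])
        also have "\<dots> = \<psi> \<phi>1 \<oplus>\<^bsub>?A\<^esub> \<psi> \<phi>2" using \<psi>E(2) d(1) d(2) by blast
        also have "\<dots> = \<psi>' v \<oplus>\<^bsub>?A\<^esub> \<psi>' w" using d \<psi>'v by simp
        finally show ?thesis .
      qed
    qed
    show "\<forall>r\<in>carrier ?A. \<forall>v\<in>V. \<psi>' (\<lambda>i. r \<otimes>\<^bsub>?A\<^esub> v i) = r \<otimes>\<^bsub>?A\<^esub> \<psi>' v"
    proof (intro ballI)
      fix r v assume r: "r \<in> carrier ?A" and "v \<in> V"
      then obtain \<phi> where d: "\<phi> \<in> ?D" "v = vec \<phi>" unfolding V_def by blast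
      then show "\<psi>' (\<lambda>i. r \<otimes>\<^bsub>?A\<^esub> v i) = r \<otimes>\<^bsub>?A\<^esub> \<psi>' v"
      proof -
        have "\<psi>' (\<lambda>i. r \<otimes>\<^bsub>?A\<^esub> v i) = \<psi>' (vec (dual_smult ?A M r \<phi>))" using d vec_sm[OF r] by simp
        also have "\<dots> = \<psi> (dual_smult ?A M r \<phi>)" by (rule \<psi>'v[OF smD[OF d(1) r]])
        also have "\<dots> = r \<otimes>\<^bsub>?A\<^esub> \<psi> \<phi>" using \<psi>E(3) d(1) r by blast
        also have "\<dots> = r \<otimes>\<^bsub>?A\<^esub> \<psi>' v" using d \<psi>'v by simp
        finally show ?thesis .
      qed
    qed
  qed
  then obtain c a where c: "c \<in> nzd n" and a: "\<forall>i. a i \<in> carrier ?A"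
    and ca: "\<forall>v\<in>V. c \<otimes>\<^bsub>?A\<^esub> \<psi>' v = finsum ?A (\<lambda>i. a i \<otimes>\<^bsub>?A\<^esub> v i) {..<k}" by blast
  define m where "m = finsum M (\<lambda>i. a i \<odot>\<^bsub>M\<^esub> h i) {..<k}"
  have fm: "(\<lambda>i. a i \<odot>\<^bsub>M\<^esub> h i) \<in> {..<k} \<rightarrow> carrier M" using a gM by auto
  have mc: "m \<in> carrier M" unfolding m_def using fm by (rule Mo.M.finsum_closed)
  have key: "\<phi> m = c \<otimes>\<^bsub>?A\<^esub> \<psi> \<phi>" if d: "\<phi> \<in> ?D" for \<phi>
  proof -
    have "\<phi> m = finsum ?A (\<lambda>i. \<phi> (a i \<odot>\<^bsub>M\<^esub> h i)) {..<k}"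
      unfolding m_def by (rule dual_finsum[OF assms(3) d _ fm]) simp
    also have "\<dots> = finsum ?A (\<lambda>i. a i \<otimes>\<^bsub>?A\<^esub> vec \<phi> i) {..<k}"
    proof (rule Mo.R.finsum_cong')
      show "(\<lambda>i. a i \<otimes>\<^bsub>?A\<^esub> vec \<phi> i) \<in> {..<k} \<rightarrow> carrier ?A"
        using a dc[OF d] gM by (auto simp: vec_def)
      show "\<phi> (a i \<odot>\<^bsub>M\<^esub> h i) = a i \<otimes>\<^bsub>?A\<^esub> vec \<phi> i" if "i \<in> {..<k}" for i
        using that a gM dE(4)[OF d] by (simp add: vec_def)
    qed simp
    also have "\<dots> = c \<otimes>\<^bsub>?A\<^esub> \<psi>' (vec \<phi>)" using ca d unfolding V_def by auto
    also have "\<dots> = c \<otimes>\<^bsub>?A\<^esub> \<psi> \<phi>" using \<psi>'v d by simp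
    finally show ?thesis .
  qed
  show "\<exists>\<alpha>\<in>nzd n. \<exists>m\<in>carrier M. ddual_smult (Rn n) M \<alpha> \<psi> = can_map (Rn n) M m"
  proof (intro bexI[OF _ c] bexI[OF _ mc])
    show "ddual_smult (Rn n) M c \<psi> = can_map (Rn n) M m"
      unfolding ddual_smult_def can_map_def by (rule restrict_ext) (simp add: key)
  qed
qed

end
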